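(* Let $B$ be any closed Euclidean ball in $\mathbb R^n$, let $S^*$ be a regular simplex inscribed into $B$, and let $P^*:C(B)\to\Pi_1(\mathbb R^n)$ be the interpolation projector with nodes at the vertices of $S^*$. Define $\psi(t)=\frac{2\sqrt n}{n+1}\big(t(n+1-t)\big)^{1/2}+\big|1-\frac{2t}{n+1}\big|$ for $0\le t\le n+1$, and $a=\big\lfloor\frac{n+1}2-\frac{\sqrt{n+1}}2\big\rfloor$. Then $$\|P^*\|_B=\max\{\psi(a),\psi(a+1)\},\qquad \sqrt n\le\|P^*\|_B\le\sqrt{n+1}.$$ Moreover, $\|P^*\|_B=\sqrt n$ only for $n=1$, and $\|P^*\|_B=\sqrt{n+1}$ if and only if $\sqrt{n+1}$ is an integer.
   Context: $C(B)$ is the space of continuous functions on $B$ with sup norm; $\Pi_1(\mathbb R^n)$ is the space of polynomials of degree $\le1$. The interpolation projector with nodes $x^{(1)},\dots,x^{(n+1)}$ (vertices of a nondegenerate simplex) maps $f$ to the unique $p\in\Pi_1(\mathbb R^n)$ with $p(x^{(j)})=f(x^{(j)})$; $\|P\|_B$ is its operator norm. A simplex is inscribed into $B$ if its vertices lie on the boundary sphere of $B$. *)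

theory Defs
  imports "HOL-Analysis.Analysis"
begin

definition Pi1 :: "(real^'n \<Rightarrow> real) set" where
  "Pi1 = {p. \<exists>a b. p = (\<lambda>x. a \<bullet> x + b)}"

definition nondeg_simplex :: "(nat \<Rightarrow> real^'n) \<Rightarrow> bool" where
  "nondeg_simplex x \<longleftrightarrow> inj_on x {..CARD('n)} \<and> \<not> affine_dependent (x ` {..CARD('n)})"

definition regular_simplex :: "(nat \<Rightarrow> real^'n) \<Rightarrow> bool" where
  "regular_simplex x \<longleftrightarrow> nondeg_simplex x \<and>
     (\<forall>i\<le>CARD('n). \<forall>j\<le>CARD('n). \<forall>k\<le>CARD('n). \<forall>l\<le>CARD('n).
        i \<noteq> j \<longrightarrow> k \<noteq> l \<longrightarrow> dist (x i) (x j) = dist (x k) (x l))"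

definition inscribed :: "(nat \<Rightarrow> real^'n) \<Rightarrow> real^'n \<Rightarrow> real \<Rightarrow> bool" where
  "inscribed x c r \<longleftrightarrow> (\<forall>j\<le>CARD('n). x j \<in> sphere c r)"

definition interp :: "(nat \<Rightarrow> real^'n) \<Rightarrow> (real^'n \<Rightarrow> real) \<Rightarrow> (real^'n \<Rightarrow> real)" where
  "interp x f = (THE p. p \<in> Pi1 \<and> (\<forall>j\<le>CARD('n). p (x j) = f (x j)))"

definition proj_norm :: "(nat \<Rightarrow> real^'n) \<Rightarrow> (real^'n) set \<Rightarrow> real" where
  "proj_norm x B = Sup {Sup ((\<lambda>y. \<bar>interp x f y\<bar>) ` B) | f.
      continuous_on B f \<and> (\<forall>y\<in>B. \<bar>f y\<bar> \<le> 1)}"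

definition psi :: "nat \<Rightarrow> real \<Rightarrow> real" where
  "psi n t = 2 * sqrt (real n) / (real n + 1) * sqrt (t * (real n + 1 - t))
             + \<bar>1 - 2 * t / (real n + 1)\<bar>"

end

theory Submission imports Defs begin

definition G :: "nat \<Rightarrow> real \<Rightarrow> real" where
  "G n e = sqrt (real n) * sqrt ((real n + 1)^2/4 - e^2) + e"

lemma psi_G:
  assumes "0 \<le> t" "t \<le> real n + 1"
  shows "psi n t = 2 / (real n + 1) * G n \<bar>(real n + 1)/2 - t\<bar>"
proof -
  have e: "t * (real n + 1 - t) = (real n + 1)^2/4 - \<bar>(real n + 1)/2 - t\<bar>^2"
    by (simp add: power2_eq_square algebra_simps)
  have "\<bar>1 - 2 * t / (real n + 1)\<bar> = 2 / (real n + 1) * \<bar>(real n + 1)/2 - t\<bar>"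
  proof -
    have "1 - 2 * t / (real n + 1) = 2 / (real n + 1) * ((real n + 1)/2 - t)"
      by (simp add: field_simps)
    then have "\<bar>1 - 2 * t / (real n + 1)\<bar> = \<bar>2 / (real n + 1)\<bar> * \<bar>(real n + 1)/2 - t\<bar>"
      by (simp only: abs_mult)
    then show ?thesis by simp
  qed
  then show ?thesis unfolding psi_def G_def e by (simp add: algebra_simps)
qed

lemma G_le:
  assumes "0 \<le> e" "e \<le> (real n + 1)/2"
  shows "G n e \<le> (real n + 1) * sqrt (real n + 1) / 2"
proof -
  define m where "m = real n + 1"
  define u where "u = sqrt (m^2/4 - e^2)"
  have A: "m^2/4 - e^2 \<ge> 0"
  proof -
    have "e^2 \<le> (m/2)^2" using assms unfolding m_def by (intro power_mono) auto
    moreover have "(m/2)^2 = m^2/4" by (simp add: power_divide)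
    ultimately show ?thesis by linarith
  qed
  have u2: "u^2 = m^2/4 - e^2" using A unfolding u_def by simp
  have u0: "u \<ge> 0" unfolding u_def using A by simp
  have sn: "sqrt (real n)^2 = real n" by simp
  have sm: "sqrt m^2 = m" unfolding m_def by simp
  have key: "(sqrt (real n) * u + e)^2 \<le> (m * sqrt m / 2)^2"
  proof -
    have "(m * sqrt m / 2)^2 = m * m^2 / 4"
      using sm by (simp add: power_mult_distrib power_divide)
    also have "\<dots> = m * (u^2 + e^2)" using u2 by simp
    finally have "(m * sqrt m / 2)^2 = m * (u^2 + e^2)" .
    moreover have "m * (u^2 + e^2) - (sqrt (real n) * u + e)^2 = (u - sqrt (real n) * e)^2"
      using sn unfolding m_def by (simp add: power2_eq_square algebra_simps)
    ultimately show ?thesis by (smt (verit) zero_le_power2)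
  qed
  have "0 \<le> m * sqrt m / 2" unfolding m_def by simp
  then have "sqrt (real n) * u + e \<le> m * sqrt m / 2"
    using key power2_le_imp_le by blast
  then show ?thesis unfolding G_def u_def m_def .
qed

lemma G_eq:
  assumes "0 \<le> e" "e \<le> (real n + 1)/2" "G n e = (real n + 1) * sqrt (real n + 1) / 2"
  shows "4 * e^2 = real n + 1"
proof -
  define m where "m = real n + 1"
  define u where "u = sqrt (m^2/4 - e^2)"
  have A: "m^2/4 - e^2 \<ge> 0"
  proof -
    have "e^2 \<le> (m/2)^2" using assms unfolding m_def by (intro power_mono) auto
    moreover have "(m/2)^2 = m^2/4" by (simp add: power_divide)
    ultimately show ?thesis by linarith
  qed
  have u2: "u^2 = m^2/4 - e^2" using A unfolding u_def by simp
  have sn: "sqrt (real n)^2 = real n" by simp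
  have sm: "sqrt m^2 = m" unfolding m_def by simp
  have "(m * sqrt m / 2)^2 = m * m^2 / 4"
    using sm by (simp add: power_mult_distrib power_divide)
  also have "\<dots> = m * (u^2 + e^2)" using u2 by simp
  finally have "(m * sqrt m / 2)^2 = m * (u^2 + e^2)" .
  moreover have "m * (u^2 + e^2) - (sqrt (real n) * u + e)^2 = (u - sqrt (real n) * e)^2"
    using sn unfolding m_def by (simp add: power2_eq_square algebra_simps)
  moreover have "sqrt (real n) * u + e = m * sqrt m / 2" using assms(3) unfolding G_def u_def m_def .
  ultimately have "(u - sqrt (real n) * e)^2 = 0" by simp
  then have "u = sqrt (real n) * e" by simp
  then have "u^2 = real n * e^2" using sn by (simp add: power_mult_distrib)
  with u2 have "m^2/4 = m * e^2" unfolding m_def by (simp add: algebra_simps)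
  then have "m * (m - 4 * e^2) = 0" by (simp add: power2_eq_square algebra_simps)
  moreover have "m \<noteq> 0" unfolding m_def by simp
  ultimately show ?thesis unfolding m_def by simp
qed

lemma aux_le:
  assumes "4*e^2 \<le> real n + 1"
  shows "real n * e^2 \<le> (real n + 1)^2/4 - (e::real)^2"
proof -
  have "(real n + 1) * (4*e^2) \<le> (real n + 1) * (real n + 1)"
    using assms by (intro mult_left_mono) auto
  then show ?thesis by (simp add: power2_eq_square algebra_simps)
qed

lemma aux_ge:
  assumes "real n + 1 \<le> 4*e^2"
  shows "(real n + 1)^2/4 - (e::real)^2 \<le> real n * e^2"
proof -
  have "(real n + 1) * (real n + 1) \<le> (real n + 1) * (4*e^2)"
    using assms by (intro mult_left_mono) auto
  then show ?thesis by (simp add: power2_eq_square algebra_simps)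
qed

lemma G_mono_up:
  assumes "0 \<le> e1" "e1 \<le> e2" "4 * e2^2 \<le> real n + 1"
  shows "G n e1 \<le> G n e2"
proof -
  define m where "m = real n + 1"
  define u1 where "u1 = sqrt (m^2/4 - e1^2)"
  define u2 where "u2 = sqrt (m^2/4 - e2^2)"
  have m1: "m \<ge> 1" unfolding m_def by simp
  have e2m: "e2^2 \<le> m^2/4"
  proof -
    have "m \<le> m^2" using m1 by (simp add: power2_eq_square)
    then show ?thesis using assms unfolding m_def[symmetric] by simp
  qed
  have e2m': "e2^2 * 4 \<le> m^2" using e2m by simp
  have e1e2: "e1^2 \<le> e2^2" using assms by (simp add: power_mono)
  have e2m': "e2^2 * 4 \<le> m^2" using e2m by simp
  have e1m': "e1^2 * 4 \<le> m^2" using e2m e1e2 by simp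
  have A1: "u1^2 = m^2/4 - e1^2" unfolding u1_def using e1m' by simp
  have A2: "u2^2 = m^2/4 - e2^2" unfolding u2_def using e2m' by simp
  have p1: "u1 \<ge> 0" "u2 \<ge> 0" unfolding u1_def u2_def using e1m' e2m' by auto
  have sn: "sqrt (real n)^2 = real n" by simp
  have b1: "sqrt (real n) * e1 \<le> u1"
  proof -
    have "4*e1^2 \<le> real n + 1" using assms e1e2 by linarith
    from aux_le[OF this] have "(sqrt (real n) * e1)^2 \<le> u1^2"
      using A1 sn unfolding m_def by (simp add: power_mult_distrib)
    then show ?thesis using p1 power2_le_imp_le by blast
  qed
  have b2: "sqrt (real n) * e2 \<le> u2"
  proof -
    from aux_le[OF assms(3)] have "(sqrt (real n) * e2)^2 \<le> u2^2"
      using A2 sn unfolding m_def by (simp add: power_mult_distrib)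
    then show ?thesis using p1 power2_le_imp_le by blast
  qed
  have d: "(u1 - u2) * (u1 + u2) = (e2 - e1) * (e2 + e1)"
    using A1 A2 by (simp add: power2_eq_square algebra_simps)
  have "sqrt (real n) * (u1 - u2) \<le> e2 - e1"
  proof (cases "u1 + u2 = 0")
    case True then have "u1 = 0" "u2 = 0" using p1 by auto
    then show ?thesis using assms by simp
  next
    case False
    then have pos: "u1 + u2 > 0" using p1 by simp
    have "sqrt (real n) * (u1 - u2) * (u1 + u2) = sqrt (real n) * (e2 - e1) * (e2 + e1)"
      using d by (simp add: mult.assoc)
    also have "\<dots> \<le> (e2 - e1) * (u1 + u2)"
    proof -
      have "sqrt (real n) * (e2 + e1) \<le> u1 + u2" using b1 b2 by (simp add: algebra_simps)
      then have "(e2 - e1) * (sqrt (real n) * (e2 + e1)) \<le> (e2 - e1) * (u1 + u2)"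
        using assms by (intro mult_left_mono) auto
      then show ?thesis by (simp add: algebra_simps)
    qed
    finally show ?thesis using pos by simp
  qed
  then show ?thesis unfolding G_def u1_def[symmetric] u2_def[symmetric] m_def[symmetric]
    by (simp add: algebra_simps)
qed

lemma G_mono_down:
  assumes "0 \<le> e1" "e1 \<le> e2" "e2 \<le> (real n + 1)/2" "real n + 1 \<le> 4 * e1^2"
  shows "G n e2 \<le> G n e1"
proof -
  define m where "m = real n + 1"
  define u1 where "u1 = sqrt (m^2/4 - e1^2)"
  define u2 where "u2 = sqrt (m^2/4 - e2^2)"
  have e2m: "e2^2 \<le> m^2/4"
  proof -
    have "e2^2 \<le> (m/2)^2" using assms unfolding m_def by (intro power_mono) auto
    moreover have "(m/2)^2 = m^2/4" by (simp add: power_divide)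
    ultimately show ?thesis by linarith
  qed
  have e1e2: "e1^2 \<le> e2^2" using assms by (simp add: power_mono)
  have e2m': "e2^2 * 4 \<le> m^2" using e2m by simp
  have e1m': "e1^2 * 4 \<le> m^2" using e2m e1e2 by simp
  have A1: "u1^2 = m^2/4 - e1^2" unfolding u1_def using e1m' by simp
  have A2: "u2^2 = m^2/4 - e2^2" unfolding u2_def using e2m' by simp
  have p1: "u1 \<ge> 0" "u2 \<ge> 0" unfolding u1_def u2_def using e1m' e2m' by auto
  have sn: "sqrt (real n)^2 = real n" by simp
  have b1: "u1 \<le> sqrt (real n) * e1"
  proof -
    from aux_ge[OF assms(4)] have "u1^2 \<le> (sqrt (real n) * e1)^2"
      using A1 sn unfolding m_def by (simp add: power_mult_distrib)
    moreover have "0 \<le> sqrt (real n) * e1" using assms by simp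
    ultimately show ?thesis using power2_le_imp_le by blast
  qed
  have b2: "u2 \<le> sqrt (real n) * e2"
  proof -
    have "real n + 1 \<le> 4*e2^2" using assms e1e2 by linarith
    from aux_ge[OF this] have "u2^2 \<le> (sqrt (real n) * e2)^2"
      using A2 sn unfolding m_def by (simp add: power_mult_distrib)
    moreover have "0 \<le> sqrt (real n) * e2" using assms by simp
    ultimately show ?thesis using power2_le_imp_le by blast
  qed
  have d: "(u1 - u2) * (u1 + u2) = (e2 - e1) * (e2 + e1)"
    using A1 A2 by (simp add: power2_eq_square algebra_simps)
  have "e2 - e1 \<le> sqrt (real n) * (u1 - u2)"
  proof (cases "u1 + u2 = 0")
    case True then have "u1 = 0" "u2 = 0" using p1 by auto
    then have "e1^2 = e2^2" using A1 A2 by simp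
    then have "e1 = e2 \<or> e1 = - e2" by (simp add: power2_eq_iff)
    then have "e1 = e2" using assms by linarith
    then show ?thesis using \<open>u1 = 0\<close> \<open>u2 = 0\<close> by simp
  next
    case False
    then have pos: "u1 + u2 > 0" using p1 by simp
    have "(e2 - e1) * (u1 + u2) \<le> (e2 - e1) * (sqrt (real n) * (e2 + e1))"
    proof -
      have "u1 + u2 \<le> sqrt (real n) * (e2 + e1)" using b1 b2 by (simp add: algebra_simps)
      then show ?thesis using assms by (intro mult_left_mono) auto
    qed
    also have "\<dots> = sqrt (real n) * ((u1 - u2) * (u1 + u2))"
      using d by (simp only: ac_simps)
    also have "\<dots> = sqrt (real n) * (u1 - u2) * (u1 + u2)"
      by (simp only: ac_simps)
    finally show ?thesis using pos by simp
  qed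
  then show ?thesis unfolding G_def u1_def[symmetric] u2_def[symmetric] m_def[symmetric]
    by (simp add: algebra_simps)
qed

lemma G_at:
  assumes "0 \<le> e" "4 * e^2 = real n + 1"
  shows "G n e = (real n + 1) * sqrt (real n + 1) / 2"
proof -
  define m where "m = real n + 1"
  have m: "4 * e^2 = m" using assms unfolding m_def by simp
  have e2: "e^2 = (real n + 1)/4" using m unfolding m_def by simp
  have "(real n + 1)^2/4 - e^2 = real n * e^2" unfolding e2
    by (simp add: power2_eq_square algebra_simps)
  then have u: "sqrt ((real n + 1)^2/4 - e^2) = sqrt (real n) * e"
    using assms by (simp add: real_sqrt_mult)
  have se: "sqrt (real n + 1) = 2 * e"
  proof -
    have h: "real n + 1 = (2*e)^2" using assms by (simp add: power_mult_distrib)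
    have s2: "sqrt ((2*e)^2) = 2*e" using assms(1) by (simp only: real_sqrt_abs abs_of_nonneg)
    show ?thesis by (subst h) (rule s2)
  qed
  have "G n e = sqrt (real n) * sqrt (real n) * e + e" unfolding G_def u
    by (simp only: mult.assoc)
  also have "\<dots> = (real n + 1) * e" by (simp add: algebra_simps)
  finally have "G n e = (real n + 1) * e" .
  then show ?thesis using se by simp
qed

lemma G_gt:
  assumes "0 < e" "e < sqrt (real n)" "e \<le> (real n + 1)/2"
  shows "G n e > sqrt (real n) * (real n + 1) / 2"
proof -
  define m where "m = real n + 1"
  define u where "u = sqrt (m^2/4 - e^2)"
  have A: "m^2/4 - e^2 \<ge> 0"
  proof -
    have "e^2 \<le> (m/2)^2" using assms unfolding m_def by (intro power_mono) auto
    moreover have "(m/2)^2 = m^2/4" by (simp add: power_divide)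
    ultimately show ?thesis by linarith
  qed
  have u2: "u^2 = m^2/4 - e^2" using A unfolding u_def by simp
  have u0: "u \<ge> 0" unfolding u_def using A by simp
  have sn: "sqrt (real n)^2 = real n" by simp
  have "sqrt (real n) * u > sqrt (real n) * m / 2 - e"
  proof (cases "sqrt (real n) * m / 2 - e < 0")
    case True
    have "sqrt (real n) * u \<ge> 0" using u0 by simp
    then show ?thesis using True by linarith
  next
    case False
    have "e * e < sqrt (real n) * e" using assms by (intro mult_strict_right_mono) auto
    then have "m * (e * e) < m * (sqrt (real n) * e)" unfolding m_def by (intro mult_strict_left_mono) auto
    then have F: "e^2 + real n * e^2 < sqrt (real n) * m * e"
      unfolding m_def by (simp add: power2_eq_square algebra_simps)
    have a2: "(sqrt (real n) * m / 2)^2 = real n * m^2/4" using sn by (simp add: power_mult_distrib power_divide)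
    have L: "(sqrt (real n) * m / 2 - e)^2 = real n * m^2/4 - sqrt (real n) * m * e + e^2"
      unfolding power2_diff a2 by simp
    have R: "(sqrt (real n) * u)^2 = real n * m^2/4 - real n * e^2"
    proof -
      have "(sqrt (real n) * u)^2 = real n * u^2" by (simp add: power_mult_distrib)
      also have "\<dots> = real n * (m^2/4 - e^2)" by (simp add: u2)
      finally show ?thesis by (simp add: right_diff_distrib)
    qed
    have "(sqrt (real n) * m / 2 - e)^2 < (sqrt (real n) * u)^2"
      unfolding L R using F by linarith
    moreover have "0 \<le> sqrt (real n) * u" using u0 by simp
    ultimately show ?thesis by (rule power2_less_imp_less)
  qed
  moreover have "G n e = sqrt (real n) * u + e" unfolding G_def u_def m_def by simp
  moreover have "sqrt (real n) * (real n + 1) / 2 = sqrt (real n) * m / 2" unfolding m_def by simp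
  ultimately show ?thesis by linarith
qed

lemma a_facts:
  assumes "a = \<lfloor>(real n + 1)/2 - sqrt (real n + 1)/2\<rfloor>"
  shows "0 \<le> a" "real_of_int a \<le> (real n + 1)/2 - sqrt (real n + 1)/2"
    "(real n + 1)/2 - sqrt (real n + 1)/2 < real_of_int a + 1"
    "real_of_int a + 1 \<le> real n + 1" "sqrt (real n + 1) \<ge> 1" "sqrt (real n + 1) \<le> real n + 1"
proof -
  define m where "m = real n + 1"
  have m1: "m \<ge> 1" unfolding m_def by simp
  show s1: "sqrt (real n + 1) \<ge> 1" by simp
  have "sqrt m \<le> m"
  proof -
    have "m \<le> m^2" using m1 by (simp add: power2_eq_square)
    then have "sqrt m \<le> sqrt (m^2)" by (rule real_sqrt_le_mono)
    then show ?thesis using m1 by simp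
  qed
  then show sm: "sqrt (real n + 1) \<le> real n + 1" unfolding m_def .
  have t0: "0 \<le> (real n + 1)/2 - sqrt (real n + 1)/2" using sm by simp
  show "real_of_int a \<le> (real n + 1)/2 - sqrt (real n + 1)/2" unfolding assms by (rule of_int_floor_le)
  show "(real n + 1)/2 - sqrt (real n + 1)/2 < real_of_int a + 1" unfolding assms by (rule real_of_int_floor_add_one_gt)
  show "0 \<le> a" unfolding assms using t0 by simp
  have "real_of_int a \<le> (real n + 1)/2 - sqrt (real n + 1)/2" unfolding assms by (rule of_int_floor_le)
  moreover have "(real n + 1)/2 - sqrt (real n + 1)/2 \<le> real n / 2" using s1 by (simp add: field_simps)
  ultimately have "real_of_int a \<le> real n / 2" by (rule order_trans)
  moreover have "real n \<ge> 0" by simp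
  ultimately show "real_of_int a + 1 \<le> real n + 1" by linarith
qed

lemma psi_le_M:
  fixes k :: int
  assumes "a = \<lfloor>(real n + 1)/2 - sqrt (real n + 1)/2\<rfloor>"
    and "0 \<le> k" "real_of_int k \<le> real n + 1"
  shows "psi n (real_of_int k) \<le> max (psi n (real_of_int a)) (psi n (real_of_int a + 1))"
proof -
  define m where "m = real n + 1"
  define d0 where "d0 = sqrt m / 2"
  note af = a_facts[OF assms(1)]
  have d0: "4 * d0^2 = m" "d0 \<ge> 0" unfolding d0_def m_def by (simp_all add: power_divide)
  define j where "j = (if 2 * k \<le> int n + 1 then k else int n + 1 - k)"
  have hk: "k \<le> int n + 1"
  proof -
    have "real_of_int k \<le> real_of_int (int n + 1)" using assms(3) by simp
    then show ?thesis by (simp only: of_int_le_iff)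
  qed
  have j0i: "0 \<le> j \<and> 2 * j \<le> int n + 1"
  proof (cases "2 * k \<le> int n + 1")
    case True then show ?thesis unfolding j_def using assms(2) by simp
  next
    case False then show ?thesis unfolding j_def using hk by simp
  qed
  have j0: "0 \<le> j" "2 * real_of_int j \<le> m"
  proof -
    show "0 \<le> j" using j0i by simp
    have "real_of_int (2 * j) \<le> real_of_int (int n + 1)" using j0i by (simp only: of_int_le_iff)
    then show "2 * real_of_int j \<le> m" unfolding m_def by simp
  qed
  define e where "e = m/2 - real_of_int j"
  have e: "\<bar>m/2 - real_of_int k\<bar> = e"
  proof (cases "2 * k \<le> int n + 1")
    case True
    then have "real_of_int (2 * k) \<le> real_of_int (int n + 1)" by (simp only: of_int_le_iff)
    then have "2 * real_of_int k \<le> real n + 1" by simp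
    then show ?thesis using True unfolding e_def j_def m_def by simp
  next
    case False
    then have "real_of_int (2 * k) > real_of_int (int n + 1)" by (simp only: of_int_less_iff not_le)
    then have "2 * real_of_int k > real n + 1" by simp
    then show ?thesis using False unfolding e_def j_def m_def by (simp add: field_simps)
  qed
  have pk: "psi n (real_of_int k) = 2/m * G n e" using psi_G[of "real_of_int k" n] e assms unfolding m_def by simp
  have e0: "0 \<le> e" "e \<le> m/2" using j0 unfolding e_def by auto
  define ea where "ea = m/2 - real_of_int a"
  have pa: "psi n (real_of_int a) = 2/m * G n ea"
  proof -
    have "real_of_int a \<le> m/2" using af(2) af(5) unfolding m_def by linarith
    then have "\<bar>m/2 - real_of_int a\<bar> = ea" unfolding ea_def by simp
    then show ?thesis using psi_G[of "real_of_int a" n] af unfolding m_def by simp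
  qed
  have ea: "d0 \<le> ea" "ea \<le> m/2"
  proof -
    have "real_of_int a \<le> m/2 - sqrt m/2" using af(2) unfolding m_def .
    then show "d0 \<le> ea" unfolding ea_def d0_def by linarith
    have "0 \<le> real_of_int a" using af(1) by simp
    then show "ea \<le> m/2" unfolding ea_def by linarith
  qed
  have mpos: "0 < 2/m" unfolding m_def by simp
  show ?thesis
  proof (cases "d0 \<le> e")
    case True
    then have "real_of_int j \<le> m/2 - sqrt m/2" unfolding e_def d0_def by simp
    then have "j \<le> a" unfolding assms(1) m_def by (simp add: le_floor_iff)
    then have "ea \<le> e" unfolding ea_def e_def by simp
    moreover have "m \<le> 4 * ea^2"
    proof -
      have "d0^2 \<le> ea^2" using ea d0 by (intro power_mono) auto
      then show ?thesis using d0 by simp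
    qed
    ultimately have "G n e \<le> G n ea" using G_mono_down[of ea e n] ea d0 e0 unfolding m_def by simp
    then have "psi n (real_of_int k) \<le> psi n (real_of_int a)" unfolding pk pa using mpos
      by (intro mult_left_mono) auto
    then show ?thesis by simp
  next
    case False
    then have "real_of_int j > m/2 - sqrt m/2" unfolding e_def d0_def by simp
    then have "a < j" unfolding assms(1) m_def by (simp add: floor_less_iff)
    then have ja: "j \<ge> a + 1" by simp
    define eb where "eb = m/2 - real_of_int a - 1"
    have "e \<le> eb" unfolding eb_def e_def using ja by simp
    then have eb0: "0 \<le> eb" using e0 by simp
    have pb: "psi n (real_of_int a + 1) = 2/m * G n eb"
    proof -
      have "\<bar>m/2 - (real_of_int a + 1)\<bar> = eb" unfolding eb_def using eb0 unfolding eb_def by simp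
      then show ?thesis using psi_G[of "real_of_int a + 1" n] af unfolding m_def by simp
    qed
    have "eb < d0" using af(3) unfolding eb_def d0_def m_def by linarith
    then have "eb^2 \<le> d0^2" using eb0 by (intro power_mono) auto
    then have "4 * eb^2 \<le> m" using d0 by simp
    then have "G n e \<le> G n eb" using G_mono_up[of e eb n] e0 \<open>e \<le> eb\<close> unfolding m_def by simp
    then have "psi n (real_of_int k) \<le> psi n (real_of_int a + 1)" unfolding pk pb using mpos
      by (intro mult_left_mono) auto
    then show ?thesis by simp
  qed
qed

lemma psi_le_sqrt:
  assumes "0 \<le> t" "t \<le> real n + 1"
  shows "psi n t \<le> sqrt (real n + 1)"
proof -
  have e1: "0 \<le> \<bar>(real n + 1)/2 - t\<bar>" by simp
  have e2: "\<bar>(real n + 1)/2 - t\<bar> \<le> (real n + 1)/2" using assms by (intro abs_leI) (simp_all add: field_simps)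
  note e = e1 e2
  have "G n \<bar>(real n + 1)/2 - t\<bar> \<le> (real n + 1) * sqrt (real n + 1) / 2" using G_le[OF e] .
  then have "2/(real n + 1) * G n \<bar>(real n + 1)/2 - t\<bar> \<le> 2/(real n + 1) * ((real n + 1) * sqrt (real n + 1) / 2)"
    by (intro mult_left_mono) auto
  also have "\<dots> = sqrt (real n + 1)" by simp
  finally show ?thesis using psi_G[OF assms] by simp
qed

lemma psi_eq_sqrt:
  assumes "0 \<le> t" "t \<le> real n + 1" "psi n t = sqrt (real n + 1)"
  shows "4 * ((real n + 1)/2 - t)^2 = real n + 1"
proof -
  have e1: "0 \<le> \<bar>(real n + 1)/2 - t\<bar>" by simp
  have e2: "\<bar>(real n + 1)/2 - t\<bar> \<le> (real n + 1)/2" using assms by (intro abs_leI) (simp_all add: field_simps)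
  note e = e1 e2
  have "2/(real n + 1) * G n \<bar>(real n + 1)/2 - t\<bar> = sqrt (real n + 1)" using psi_G[OF assms(1,2)] assms(3) by simp
  then have "G n \<bar>(real n + 1)/2 - t\<bar> = (real n + 1) * sqrt (real n + 1) / 2"
    by (simp add: field_simps)
  from G_eq[OF e this] show ?thesis by simp
qed

lemma sqrt_key:
  assumes "n \<ge> 2"
  shows "sqrt (real n + 1)/2 + 1/2 < sqrt (real n)"
proof -
  have n2: "real n \<ge> 2" using assms by simp
  have "16 * real n < 9 * real n * real n"
  proof -
    have "18 * real n \<le> 9 * real n * real n" using n2 by (simp add: mult_right_mono)
    then show ?thesis using n2 by simp
  qed
  then have "real n + 1 < ((3 * real n - 2)/2)^2" by (simp add: power2_eq_square field_simps)
  then have "sqrt (real n + 1) < sqrt (((3 * real n - 2)/2)^2)" by (simp only: real_sqrt_less_iff)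
  then have s1: "sqrt (real n + 1) < (3 * real n - 2)/2" using n2 by simp
  have "(sqrt (real n + 1) + 1)^2 = real n + 1 + 2 * sqrt (real n + 1) + 1"
    by (simp add: power2_eq_square algebra_simps)
  also have "\<dots> < (2 * sqrt (real n))^2" using s1 by (simp add: power_mult_distrib)
  finally have "sqrt (real n + 1) + 1 < 2 * sqrt (real n)"
    by (rule power2_less_imp_less) simp
  then show ?thesis by simp
qed

lemma M_gt:
  assumes "a = \<lfloor>(real n + 1)/2 - sqrt (real n + 1)/2\<rfloor>" "n \<ge> 2"
  shows "sqrt (real n) < max (psi n (real_of_int a)) (psi n (real_of_int a + 1))"
proof -
  define m where "m = real n + 1"
  define d0 where "d0 = sqrt m / 2"
  note af = a_facts[OF assms(1)]
  note key = sqrt_key[OF assms(2)]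
  have m3: "m \<ge> 3" unfolding m_def using assms by simp
  have "sqrt 1 < sqrt m" using m3 by simp
  then have d0h: "d0 > 1/2" unfolding d0_def by simp
  define ea where "ea = m/2 - real_of_int a"
  have ea: "d0 \<le> ea" "ea < d0 + 1" "ea \<le> m/2"
  proof -
    have "real_of_int a \<le> m/2 - sqrt m/2" "m/2 - sqrt m/2 < real_of_int a + 1" "0 \<le> real_of_int a"
      using af(1,2,3) unfolding m_def by simp_all
    then show "d0 \<le> ea" "ea < d0 + 1" "ea \<le> m/2" unfolding ea_def d0_def by linarith+
  qed
  have mpos: "0 < 2/m" unfolding m_def by simp
  have hh: "2/m * (sqrt (real n) * m / 2) = sqrt (real n)" unfolding m_def by simp
  show ?thesis
  proof (cases "ea \<le> d0 + 1/2")
    case True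
    have "G n ea > sqrt (real n) * m / 2"
      using G_gt[of ea n] True ea d0h key unfolding d0_def m_def by simp
    then have "2/m * G n ea > 2/m * (sqrt (real n) * m / 2)" by (rule mult_strict_left_mono[OF _ mpos])
    then have "2/m * G n ea > sqrt (real n)" unfolding hh .
    moreover have "psi n (real_of_int a) = 2/m * G n ea"
    proof -
      have "0 \<le> m/2 - real_of_int a" using ea d0h unfolding ea_def by linarith
      then have "\<bar>m/2 - real_of_int a\<bar> = ea" unfolding ea_def by simp
      then show ?thesis using psi_G[of "real_of_int a" n] af unfolding m_def by simp
    qed
    ultimately show ?thesis by simp
  next
    case False
    define eb where "eb = ea - 1"
    have eb: "0 < eb" "eb < d0" "eb \<le> m/2" using False ea d0h unfolding eb_def by auto
    have "G n eb > sqrt (real n) * m / 2"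
      using G_gt[of eb n] eb key unfolding d0_def m_def by simp
    then have "2/m * G n eb > 2/m * (sqrt (real n) * m / 2)" by (rule mult_strict_left_mono[OF _ mpos])
    then have "2/m * G n eb > sqrt (real n)" unfolding hh .
    moreover have "psi n (real_of_int a + 1) = 2/m * G n eb"
    proof -
      have "\<bar>m/2 - (real_of_int a + 1)\<bar> = eb" unfolding eb_def ea_def using eb unfolding eb_def ea_def by simp
      then show ?thesis using psi_G[of "real_of_int a + 1" n] af unfolding m_def by simp
    qed
    ultimately show ?thesis by simp
  qed
qed

lemma M_one:
  assumes "a = \<lfloor>(real n + 1)/2 - sqrt (real n + 1)/2\<rfloor>" "n = 1"
  shows "max (psi n (real_of_int a)) (psi n (real_of_int a + 1)) = 1"
proof -
  have "sqrt 2 < sqrt (4::real)" by (subst real_sqrt_less_iff) simp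
  also have "sqrt (4::real) = sqrt (2^2)" by simp
  also have "\<dots> = 2" by simp
  finally have s2: "sqrt 2 < 2" "0 < sqrt (2::real)" by simp_all
  have "a = 0" unfolding assms using s2 by (simp add: floor_eq_iff)
  then show ?thesis using assms(2) by (simp add: psi_def)
qed

lemma M_le_sqrt:
  assumes "a = \<lfloor>(real n + 1)/2 - sqrt (real n + 1)/2\<rfloor>"
  shows "max (psi n (real_of_int a)) (psi n (real_of_int a + 1)) \<le> sqrt (real n + 1)"
  using a_facts[OF assms] psi_le_sqrt[of "real_of_int a" n] psi_le_sqrt[of "real_of_int a + 1" n]
  by simp

lemma M_eq:
  assumes "a = \<lfloor>(real n + 1)/2 - sqrt (real n + 1)/2\<rfloor>"
  shows "max (psi n (real_of_int a)) (psi n (real_of_int a + 1)) = sqrt (real n + 1)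
     \<longleftrightarrow> sqrt (real n + 1) \<in> \<int>"
proof
  note af = a_facts[OF assms]
  assume h: "max (psi n (real_of_int a)) (psi n (real_of_int a + 1)) = sqrt (real n + 1)"
  obtain k :: int where k: "0 \<le> k" "real_of_int k \<le> real n + 1" "psi n (real_of_int k) = sqrt (real n + 1)"
  proof (cases "psi n (real_of_int a) \<le> psi n (real_of_int a + 1)")
    case True
    then have "psi n (real_of_int (a + 1)) = sqrt (real n + 1)" using h by simp
    then show ?thesis using that[of "a+1"] af by simp
  next
    case False
    then show ?thesis using that[of a] af h by simp
  qed
  have "4 * ((real n + 1)/2 - real_of_int k)^2 = real n + 1"
    using psi_eq_sqrt[of "real_of_int k" n] k by simp
  moreover have "(real n + 1 - 2 * real_of_int k)^2 = 4 * ((real n + 1)/2 - real_of_int k)^2"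
  proof -
    have h: "real n + 1 - 2 * real_of_int k = 2 * ((real n + 1)/2 - real_of_int k)" by (simp add: field_simps)
    show ?thesis unfolding h by (simp only: power_mult_distrib) simp
  qed
  ultimately have "real n + 1 = (real n + 1 - 2 * real_of_int k)^2" by simp
  then have "sqrt (real n + 1) = sqrt ((real n + 1 - 2 * real_of_int k)^2)" by (rule arg_cong)
  also have "\<dots> = \<bar>real n + 1 - 2 * real_of_int k\<bar>" by (rule real_sqrt_abs)
  also have "\<dots> = real_of_int \<bar>int n + 1 - 2 * k\<bar>" by simp
  finally show "sqrt (real n + 1) \<in> \<int>" by simp
next
  note af = a_facts[OF assms]
  assume "sqrt (real n + 1) \<in> \<int>"
  then obtain q :: int where q: "sqrt (real n + 1) = real_of_int q" by (auto elim: Ints_cases)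
  have q1: "real_of_int q \<ge> 1" using af(5) q by simp
  have mq: "real n + 1 = (real_of_int q)^2"
  proof -
    have "(sqrt (real n + 1))^2 = real n + 1" by simp
    then show ?thesis using q by simp
  qed
  have "even (q * (q - 1))" by simp
  then obtain z where z: "q * (q - 1) = 2 * z" by (erule evenE)
  have "(real n + 1)/2 - sqrt (real n + 1)/2 = real_of_int z"
  proof -
    have "real_of_int (q * (q - 1)) = real_of_int (2 * z)" using z by simp
    then have "(real_of_int q)^2 - real_of_int q = 2 * real_of_int z" by (simp add: power2_eq_square algebra_simps)
    then show ?thesis using mq q by simp
  qed
  then have az: "a = z" unfolding assms by simp
  define ea where "ea = (real n + 1)/2 - real_of_int a"
  have ea: "ea = real_of_int q / 2" unfolding ea_def az
    using \<open>(real n + 1)/2 - sqrt (real n + 1)/2 = real_of_int z\<close> q by linarith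
  have "4 * ea^2 = real n + 1" unfolding ea mq by (simp add: power_divide)
  moreover have ea0: "0 \<le> ea" unfolding ea using q1 by simp
  ultimately have gX: "G n ea = (real n + 1) * sqrt (real n + 1) / 2"
    using G_at[of ea n] by simp
  have pa: "psi n (real_of_int a) = 2/(real n + 1) * G n ea"
  proof -
    have "\<bar>(real n + 1)/2 - real_of_int a\<bar> = ea" using ea0 unfolding ea_def by simp
    then show ?thesis using psi_G[of "real_of_int a" n] af by simp
  qed
  have "psi n (real_of_int a) = 2/(real n + 1) * ((real n + 1) * sqrt (real n + 1) / 2)" unfolding pa gX by (rule refl)
  also have "\<dots> = sqrt (real n + 1)" by simp
  finally have "psi n (real_of_int a) = sqrt (real n + 1)" .
  then show "max (psi n (real_of_int a)) (psi n (real_of_int a + 1)) = sqrt (real n + 1)"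
    using M_le_sqrt[OF assms] by simp
qed

lemma sum_pm:
  fixes g :: "nat \<Rightarrow> real"
  assumes "finite A" "J \<subseteq> A"
  shows "(\<Sum>j\<in>A. (if j \<in> J then 1 else -1) * g j) = 2 * sum g J - sum g A"
proof -
  have "(\<Sum>j\<in>A. (if j \<in> J then 1 else -1) * g j) = (\<Sum>j\<in>A. if j \<in> J then g j else - g j)"
    by (rule sum.cong) auto
  also have "\<dots> = sum g (A \<inter> {j. j \<in> J}) + sum (\<lambda>j. - g j) (A \<inter> - {j. j \<in> J})"
    using assms(1) by (rule sum.If_cases)
  also have "A \<inter> {j. j \<in> J} = J" using assms(2) by auto
  also have "A \<inter> - {j. j \<in> J} = A - J" by auto
  also have "sum (\<lambda>j. - g j) (A - J) = - (sum g A - sum g J)"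
    using assms by (simp add: sum_negf sum_diff)
  finally show ?thesis by simp
qed

locale rs =
  fixes c :: "real^'n" and r :: real and x :: "nat \<Rightarrow> real^'n"
  assumes r: "r > 0" and reg: "regular_simplex x" and ins: "inscribed x c r"
begin

definition u :: "nat \<Rightarrow> real^'n" where "u j = x j - c"

lemma norm_u: "j \<le> CARD('n) \<Longrightarrow> norm (u j) = r"
  using ins unfolding inscribed_def u_def by (auto simp: dist_norm norm_minus_commute)

lemma inner_uu: "j \<le> CARD('n) \<Longrightarrow> u j \<bullet> u j = r^2"
  using norm_u by (simp add: power2_norm_eq_inner[symmetric])

definition rho where "rho = u 0 \<bullet> u 1"

lemma inner_u_gen: "i \<le> CARD('n) \<Longrightarrow> j \<le> CARD('n) \<Longrightarrow> i \<noteq> j \<Longrightarrow>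
   u i \<bullet> u j = r^2 - (dist (x i) (x j))^2 / 2"
proof -
  assume h: "i \<le> CARD('n)" "j \<le> CARD('n)" "i \<noteq> j"
  have "(dist (x i) (x j))^2 = (u i - u j) \<bullet> (u i - u j)"
    unfolding u_def dist_norm power2_norm_eq_inner by simp
  also have "\<dots> = u i \<bullet> u i + u j \<bullet> u j - 2 * (u i \<bullet> u j)"
    by (simp add: inner_diff_left inner_diff_right inner_commute)
  finally have dd: "(dist (x i) (x j))^2 = r^2 + r^2 - 2 * (u i \<bullet> u j)" using inner_uu h by simp
  then show ?thesis by linarith
qed

lemma inner_u: "i \<le> CARD('n) \<Longrightarrow> j \<le> CARD('n) \<Longrightarrow> i \<noteq> j \<Longrightarrow> u i \<bullet> u j = rho"
proof -
  assume h: "i \<le> CARD('n)" "j \<le> CARD('n)" "i \<noteq> j"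
  have n1: "1 \<le> CARD('n)" by (simp add: Suc_leI)
  have all: "\<forall>i\<le>CARD('n). \<forall>j\<le>CARD('n). \<forall>k\<le>CARD('n). \<forall>l\<le>CARD('n).
        i \<noteq> j \<longrightarrow> k \<noteq> l \<longrightarrow> dist (x i) (x j) = dist (x k) (x l)"
    using reg unfolding regular_simplex_def by (rule conjunct2)
  have "dist (x i) (x j) = dist (x 0) (x 1)"
    using all[rule_format, of i j 0 1] h n1 by simp
  then show ?thesis using inner_u_gen[OF h] inner_u_gen[of 0 1] n1 unfolding rho_def by simp
qed

lemma aff_all: "\<exists>\<mu>. (\<Sum>j\<le>CARD('n). \<mu> j) = 1 \<and> (\<Sum>j\<le>CARD('n). \<mu> j *\<^sub>R x j) = y"
proof -
  have inj: "inj_on x {..CARD('n)}" and ind: "\<not> affine_dependent (x ` {..CARD('n)})"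
    using reg unfolding regular_simplex_def nondeg_simplex_def by auto
  have "card (x ` {..CARD('n)}) = CARD('n) + 1" using inj by (simp add: card_image)
  then have "aff_dim (x ` {..CARD('n)}) = int CARD('n)"
    using aff_dim_affine_independent[OF ind] by simp
  then have "affine hull (x ` {..CARD('n)}) = UNIV"
    using aff_dim_eq_full[where S="x ` {..CARD('n)}"] by simp
  then have "y \<in> affine hull (x ` {..CARD('n)})" by simp
  then obtain v where v: "sum v (x ` {..CARD('n)}) = 1" "(\<Sum>p\<in>x ` {..CARD('n)}. v p *\<^sub>R p) = y"
    by (auto simp: affine_hull_finite)
  show ?thesis
  proof (intro exI conjI)
    show "(\<Sum>j\<le>CARD('n). v (x j)) = 1" using v(1) sum.reindex[OF inj, of v] by simp
    show "(\<Sum>j\<le>CARD('n). v (x j) *\<^sub>R x j) = y" using v(2) sum.reindex[OF inj, of "\<lambda>p. v p *\<^sub>R p"] by simp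
  qed
qed

lemma sum_inner_u: "i \<le> CARD('n) \<Longrightarrow> (\<Sum>j\<le>CARD('n). u j) \<bullet> u i = r^2 + real CARD('n) * rho"
proof -
  assume i: "i \<le> CARD('n)"
  have "(\<Sum>j\<le>CARD('n). u j) \<bullet> u i = (\<Sum>j\<le>CARD('n). u j \<bullet> u i)" by (simp add: inner_sum_left)
  also have "\<dots> = u i \<bullet> u i + (\<Sum>j\<in>{..CARD('n)} - {i}. u j \<bullet> u i)"
    using i by (simp add: sum.remove)
  also have "(\<Sum>j\<in>{..CARD('n)} - {i}. u j \<bullet> u i) = (\<Sum>j\<in>{..CARD('n)} - {i}. rho)"
    using i by (intro sum.cong) (auto intro: inner_u)
  also have "\<dots> = real CARD('n) * rho" using i by simp
  finally show ?thesis using inner_uu[OF i] by simp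
qed

lemma rho_val: "rho = -(r^2) / real CARD('n)" and sum_u: "(\<Sum>j\<le>CARD('n). u j) = 0"
proof -
  obtain \<mu> where mu: "(\<Sum>j\<le>CARD('n). \<mu> j) = 1" "(\<Sum>j\<le>CARD('n). \<mu> j *\<^sub>R x j) = c"
    using aff_all by blast
  have "(\<Sum>j\<le>CARD('n). \<mu> j *\<^sub>R u j) = (\<Sum>j\<le>CARD('n). \<mu> j *\<^sub>R x j) - (\<Sum>j\<le>CARD('n). \<mu> j) *\<^sub>R c"
    unfolding u_def by (simp add: scaleR_diff_right sum_subtractf scaleR_sum_left)
  then have z: "(\<Sum>j\<le>CARD('n). \<mu> j *\<^sub>R u j) = 0" using mu by simp
  define s where "s = (\<Sum>j\<le>CARD('n). u j)"
  have "0 = s \<bullet> (\<Sum>j\<le>CARD('n). \<mu> j *\<^sub>R u j)" using z by simp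
  also have "\<dots> = (\<Sum>j\<le>CARD('n). \<mu> j * (s \<bullet> u j))" by (simp add: inner_sum_right)
  also have "\<dots> = (\<Sum>j\<le>CARD('n). \<mu> j * (r^2 + real CARD('n) * rho))"
    by (rule sum.cong) (simp_all add: s_def sum_inner_u)
  also have "\<dots> = r^2 + real CARD('n) * rho" using mu by (simp add: sum_distrib_right[symmetric])
  finally have k0: "r^2 + real CARD('n) * rho = 0" by simp
  then show "rho = -(r^2) / real CARD('n)" by (simp add: field_simps)
  have "s \<bullet> s = (\<Sum>j\<le>CARD('n). s \<bullet> u j)" unfolding s_def by (simp add: inner_sum_right)
  also have "\<dots> = (\<Sum>j\<le>CARD('n). 0)"
    by (rule sum.cong) (simp_all add: s_def sum_inner_u k0)
  also have "\<dots> = 0" by simp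
  finally show "(\<Sum>j\<le>CARD('n). u j) = 0" unfolding s_def[symmetric] by simp
qed

end

context rs
begin

definition lam :: "nat \<Rightarrow> real^'n \<Rightarrow> real" where
  "lam j y = (1 + real CARD('n) / r^2 * (u j \<bullet> (y - c))) / (real CARD('n) + 1)"

definition Lf :: "(nat \<Rightarrow> real) \<Rightarrow> real^'n \<Rightarrow> real" where
  "Lf \<sigma> y = (\<Sum>j\<le>CARD('n). \<sigma> j * lam j y)"

lemma lam_x: "i \<le> CARD('n) \<Longrightarrow> j \<le> CARD('n) \<Longrightarrow> lam j (x i) = (if i = j then 1 else 0)"
proof -
  assume h: "i \<le> CARD('n)" "j \<le> CARD('n)"
  have xi: "x i - c = u i" unfolding u_def by simp
  have n0: "real CARD('n) > 0" by simp
  show ?thesis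
  proof (cases "i = j")
    case True
    then show ?thesis using inner_uu[OF h(2)] r unfolding lam_def xi by simp
  next
    case False
    then have "u j \<bullet> u i = -(r^2) / real CARD('n)" using inner_u[OF h(2) h(1)] rho_val by simp
    then show ?thesis using False r n0 unfolding lam_def xi by simp
  qed
qed

lemma Lf_x: "i \<le> CARD('n) \<Longrightarrow> Lf \<sigma> (x i) = \<sigma> i"
proof -
  assume i: "i \<le> CARD('n)"
  have "Lf \<sigma> (x i) = (\<Sum>j\<le>CARD('n). if j = i then \<sigma> i else 0)"
    unfolding Lf_def by (rule sum.cong) (auto simp: lam_x i)
  also have "\<dots> = \<sigma> i" using i by simp
  finally show ?thesis .
qed

lemma lam_lin: "lam j y = ((real CARD('n) / (r^2 * (real CARD('n) + 1))) *\<^sub>R u j) \<bullet> y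
     + (1 - real CARD('n) / r^2 * (u j \<bullet> c)) / (real CARD('n) + 1)"
  unfolding lam_def by (simp add: inner_diff_right add_divide_distrib diff_divide_distrib algebra_simps)

lemma Lf_Pi1: "Lf \<sigma> \<in> Pi1"
proof -
  define A where "A j = (real CARD('n) / (r^2 * (real CARD('n) + 1))) *\<^sub>R u j" for j
  define B where "B j = (1 - real CARD('n) / r^2 * (u j \<bullet> c)) / (real CARD('n) + 1)" for j
  have "Lf \<sigma> y = (\<Sum>j\<le>CARD('n). \<sigma> j *\<^sub>R A j) \<bullet> y + (\<Sum>j\<le>CARD('n). \<sigma> j * B j)" for y
    unfolding Lf_def lam_lin A_def[symmetric] B_def[symmetric]
    by (simp add: inner_sum_left sum.distrib distrib_left)
  then have "Lf \<sigma> = (\<lambda>y. (\<Sum>j\<le>CARD('n). \<sigma> j *\<^sub>R A j) \<bullet> y + (\<Sum>j\<le>CARD('n). \<sigma> j * B j))" by auto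
  then show ?thesis unfolding Pi1_def by blast
qed

lemma pi1_comb:
  assumes "p \<in> Pi1" "(\<Sum>j\<le>CARD('n). \<mu> j) = 1"
  shows "p (\<Sum>j\<le>CARD('n). \<mu> j *\<^sub>R x j) = (\<Sum>j\<le>CARD('n). \<mu> j * p (x j))"
proof -
  obtain a b where p: "p = (\<lambda>y. a \<bullet> y + b)" using assms(1) unfolding Pi1_def by blast
  have "p (\<Sum>j\<le>CARD('n). \<mu> j *\<^sub>R x j) = (\<Sum>j\<le>CARD('n). \<mu> j * (a \<bullet> x j)) + (\<Sum>j\<le>CARD('n). \<mu> j) * b"
    unfolding p using assms(2) by (simp add: inner_sum_right)
  also have "\<dots> = (\<Sum>j\<le>CARD('n). \<mu> j * p (x j))"
    unfolding p by (simp add: sum.distrib distrib_left sum_distrib_right)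
  finally show ?thesis .
qed

lemma pi1_unique:
  assumes "p \<in> Pi1" "q \<in> Pi1" "\<And>j. j \<le> CARD('n) \<Longrightarrow> p (x j) = q (x j)"
  shows "p = q"
proof
  fix y
  obtain \<mu> where mu: "(\<Sum>j\<le>CARD('n). \<mu> j) = 1" "(\<Sum>j\<le>CARD('n). \<mu> j *\<^sub>R x j) = y"
    using aff_all by blast
  have "p y = (\<Sum>j\<le>CARD('n). \<mu> j * p (x j))" using pi1_comb[OF assms(1) mu(1)] mu(2) by simp
  also have "\<dots> = (\<Sum>j\<le>CARD('n). \<mu> j * q (x j))" using assms(3) by (intro sum.cong) auto
  also have "\<dots> = q y" using pi1_comb[OF assms(2) mu(1)] mu(2) by simp
  finally show "p y = q y" .
qed

lemma interp_eq: "interp x f = Lf (\<lambda>j. f (x j))"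
  unfolding interp_def
proof (rule the_equality)
  show "Lf (\<lambda>j. f (x j)) \<in> Pi1 \<and> (\<forall>j\<le>CARD('n). Lf (\<lambda>j. f (x j)) (x j) = f (x j))"
    using Lf_Pi1 Lf_x by auto
  fix p assume "p \<in> Pi1 \<and> (\<forall>j\<le>CARD('n). p (x j) = f (x j))"
  then show "p = Lf (\<lambda>j. f (x j))" using Lf_Pi1 Lf_x by (intro pi1_unique) auto
qed

lemma Lf_cong: "(\<And>j. j \<le> CARD('n) \<Longrightarrow> \<sigma> j = \<tau> j) \<Longrightarrow> Lf \<sigma> = Lf \<tau>"
  unfolding Lf_def by (intro ext sum.cong) auto

end

context rs
begin

definition w :: "nat set \<Rightarrow> real^'n" where "w J = (\<Sum>j\<in>J. u j)"

definition tau :: "nat set \<Rightarrow> nat \<Rightarrow> real" where "tau J j = (if j \<in> J then 1 else -1)"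

lemma Lf_sign:
  assumes "J \<subseteq> {..CARD('n)}"
  shows "Lf (tau J) y = ((2 * real (card J) - (real CARD('n) + 1))
           + 2 * real CARD('n) / r^2 * (w J \<bullet> (y - c))) / (real CARD('n) + 1)"
proof -
  define C where "C = real CARD('n) / r^2"
  define g where "g j = u j \<bullet> (y - c)" for j
  have fin: "finite {..CARD('n)}" by simp
  have s1: "(\<Sum>j\<le>CARD('n). tau J j * 1) = 2 * real (card J) - (real CARD('n) + 1)"
    using sum_pm[OF fin assms, of "\<lambda>_. 1"] unfolding tau_def by simp
  have s2: "(\<Sum>j\<le>CARD('n). tau J j * g j) = 2 * (w J \<bullet> (y - c))"
  proof -
    have "(\<Sum>j\<le>CARD('n). tau J j * g j) = 2 * sum g J - sum g {..CARD('n)}"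
      using sum_pm[OF fin assms, of g] unfolding tau_def by simp
    moreover have "sum g {..CARD('n)} = 0" unfolding g_def using sum_u by (simp add: inner_sum_left[symmetric])
    moreover have "sum g J = w J \<bullet> (y - c)" unfolding g_def w_def by (simp add: inner_sum_left)
    ultimately show ?thesis by simp
  qed
  have "Lf (tau J) y = (\<Sum>j\<le>CARD('n). (tau J j * 1 + C * (tau J j * g j)) / (real CARD('n) + 1))"
    unfolding Lf_def lam_def C_def g_def by (rule sum.cong) (simp_all add: algebra_simps)
  also have "\<dots> = ((\<Sum>j\<le>CARD('n). tau J j * 1) + C * (\<Sum>j\<le>CARD('n). tau J j * g j)) / (real CARD('n) + 1)"
    by (simp add: sum_divide_distrib[symmetric] sum.distrib sum_distrib_left)
  also have "\<dots> = ((2 * real (card J) - (real CARD('n) + 1))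
           + 2 * real CARD('n) / r^2 * (w J \<bullet> (y - c))) / (real CARD('n) + 1)"
    unfolding s1 s2 C_def by simp
  finally show ?thesis .
qed

lemma norm_w:
  assumes "J \<subseteq> {..CARD('n)}"
  shows "(norm (w J))^2 * real CARD('n) = r^2 * real (card J) * (real CARD('n) + 1 - real (card J))"
proof -
  have fin: "finite J" using assms finite_subset by blast
  have row: "(\<Sum>j\<in>J. u j \<bullet> u i) = r^2 + (real (card J) - 1) * rho" if i: "i \<in> J" for i
  proof -
    have iN: "i \<le> CARD('n)" using i assms by auto
    have "(\<Sum>j\<in>J. u j \<bullet> u i) = u i \<bullet> u i + (\<Sum>j\<in>J - {i}. u j \<bullet> u i)"
      using fin i by (simp add: sum.remove)
    also have "(\<Sum>j\<in>J - {i}. u j \<bullet> u i) = (\<Sum>j\<in>J - {i}. rho)"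
      using assms iN by (intro sum.cong) (auto intro: inner_u)
    also have "\<dots> = (real (card J) - 1) * rho"
    proof -
      have cJ: "1 \<le> card J" using fin i by (metis card_0_eq empty_iff less_one not_le)
      then show ?thesis using fin i by (simp add: of_nat_diff)
    qed
    finally show ?thesis using inner_uu[OF iN] by simp
  qed
  have "(norm (w J))^2 = (\<Sum>i\<in>J. \<Sum>j\<in>J. u j \<bullet> u i)"
    unfolding power2_norm_eq_inner w_def by (simp add: inner_sum_left inner_sum_right)
  also have "\<dots> = (\<Sum>i\<in>J. r^2 + (real (card J) - 1) * rho)" using row by (rule sum.cong[OF refl])
  also have "\<dots> = real (card J) * (r^2 + (real (card J) - 1) * rho)" by simp
  finally have X: "(norm (w J))^2 = real (card J) * (r^2 + (real (card J) - 1) * rho)" .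
  have "(norm (w J))^2 * real CARD('n) = real (card J) * (r^2 * real CARD('n) + (real (card J) - 1) * (rho * real CARD('n)))"
    unfolding X by (simp add: algebra_simps)
  also have "rho * real CARD('n) = -(r^2)" unfolding rho_val by simp
  finally show ?thesis by (simp add: algebra_simps)
qed

lemma norm_w_sqrt:
  assumes "J \<subseteq> {..CARD('n)}"
  shows "2 * real CARD('n) / r^2 * (norm (w J) * r)
     = 2 * sqrt (real CARD('n)) * sqrt (real (card J) * (real CARD('n) + 1 - real (card J)))"
proof -
  define k where "k = real (card J)"
  define n where "n = real CARD('n)"
  have n0: "n > 0" unfolding n_def by simp
  have nw: "(norm (w J))^2 * n = r^2 * k * (n + 1 - k)" using norm_w[OF assms] unfolding k_def n_def .
  have kk: "k * (n + 1 - k) \<ge> 0"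
  proof -
    have "card J \<le> card {..CARD('n)}" using assms by (intro card_mono) auto
    then have "k \<le> n + 1" unfolding k_def n_def by simp
    then show ?thesis unfolding k_def by simp
  qed
  have "norm (w J) * sqrt n = r * sqrt (k * (n + 1 - k))"
  proof -
    have "(norm (w J) * sqrt n)^2 = (r * sqrt (k * (n + 1 - k)))^2"
      using nw n0 kk by (simp add: power_mult_distrib)
    moreover have "norm (w J) * sqrt n \<ge> 0" "r * sqrt (k * (n + 1 - k)) \<ge> 0" using r n0 kk by auto
    ultimately show ?thesis using power2_eq_iff_nonneg by blast
  qed
  moreover have "2 * n / r^2 * (norm (w J) * r) = 2 * sqrt n * (norm (w J) * sqrt n) / r"
  proof -
    have "sqrt n * sqrt n = n" using n0 by simp
    then show ?thesis using r by (simp add: power2_eq_square field_simps)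
  qed
  ultimately have "2 * n / r^2 * (norm (w J) * r) = 2 * sqrt n * sqrt (k * (n + 1 - k))"
    using r by simp
  then show ?thesis unfolding k_def n_def .
qed

lemma psi_card:
  "psi CARD('n) (real (card J)) = (2 * sqrt (real CARD('n)) * sqrt (real (card J) * (real CARD('n) + 1 - real (card J)))
     + \<bar>2 * real (card J) - (real CARD('n) + 1)\<bar>) / (real CARD('n) + 1)"
proof -
  have "\<bar>1 - 2 * real (card J) / (real CARD('n) + 1)\<bar> = \<bar>2 * real (card J) - (real CARD('n) + 1)\<bar> / (real CARD('n) + 1)"
  proof -
    have "1 - 2 * real (card J) / (real CARD('n) + 1) = - (2 * real (card J) - (real CARD('n) + 1)) / (real CARD('n) + 1)"
      by (simp add: field_simps)
    then show ?thesis by simp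
  qed
  then show ?thesis unfolding psi_def by (simp add: add_divide_distrib)
qed

lemma Lf_sign_upper:
  assumes "J \<subseteq> {..CARD('n)}" "y \<in> cball c r"
  shows "Lf (tau J) y \<le> psi CARD('n) (real (card J))"
proof -
  have "w J \<bullet> (y - c) \<le> norm (w J) * norm (y - c)" by (rule norm_cauchy_schwarz)
  also have "\<dots> \<le> norm (w J) * r" using assms(2) by (intro mult_left_mono) (auto simp: dist_norm norm_minus_commute)
  finally have "2 * real CARD('n) / r^2 * (w J \<bullet> (y - c)) \<le> 2 * real CARD('n) / r^2 * (norm (w J) * r)"
    by (intro mult_left_mono) auto
  also have "\<dots> = 2 * sqrt (real CARD('n)) * sqrt (real (card J) * (real CARD('n) + 1 - real (card J)))"
    by (rule norm_w_sqrt[OF assms(1)])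
  finally have h: "2 * real CARD('n) / r^2 * (w J \<bullet> (y - c)) \<le> \<dots>" .
  have "2 * real (card J) - (real CARD('n) + 1) \<le> \<bar>2 * real (card J) - (real CARD('n) + 1)\<bar>" by simp
  with h have "(2 * real (card J) - (real CARD('n) + 1)) + 2 * real CARD('n) / r^2 * (w J \<bullet> (y - c))
     \<le> 2 * sqrt (real CARD('n)) * sqrt (real (card J) * (real CARD('n) + 1 - real (card J)))
        + \<bar>2 * real (card J) - (real CARD('n) + 1)\<bar>" by linarith
  then show ?thesis unfolding Lf_sign[OF assms(1)] psi_card by (simp add: divide_right_mono)
qed

lemma Lf_sign_lower:
  assumes "J \<subseteq> {..CARD('n)}"
  shows "\<exists>y\<in>cball c r. psi CARD('n) (real (card J)) \<le> \<bar>Lf (tau J) y\<bar>"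
proof -
  define e :: real where "e = (if 2 * real (card J) - (real CARD('n) + 1) \<ge> 0 then 1 else -1)"
  define y where "y = c + (if w J = 0 then 0 else (e * r / norm (w J)) *\<^sub>R w J)"
  have e1: "\<bar>e\<bar> = 1" "e * e = 1" unfolding e_def by auto
  have ey: "e * (2 * real (card J) - (real CARD('n) + 1)) = \<bar>2 * real (card J) - (real CARD('n) + 1)\<bar>"
    unfolding e_def by auto
  have yc: "norm (y - c) \<le> r" unfolding y_def using r e1 by (auto simp: abs_mult)
  have wz: "w J \<bullet> (y - c) = e * r * norm (w J)"
  proof (cases "w J = 0")
    case True then show ?thesis unfolding y_def by simp
  next
    case False
    then have "w J \<bullet> (y - c) = e * r / norm (w J) * (w J \<bullet> w J)" unfolding y_def by simp
    also have "w J \<bullet> w J = norm (w J) * norm (w J)" by (simp add: power2_norm_eq_inner[symmetric] power2_eq_square)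
    finally show ?thesis using False by simp
  qed
  have gen: "\<And>A B Z. e * ((A + B * Z) / (real CARD('n) + 1)) = (e * A + B * (e * Z)) / (real CARD('n) + 1)"
    by (simp add: field_simps)
  have "e * Lf (tau J) y = (e * (2 * real (card J) - (real CARD('n) + 1))
           + 2 * real CARD('n) / r^2 * (e * (w J \<bullet> (y - c)))) / (real CARD('n) + 1)"
    unfolding Lf_sign[OF assms] by (rule gen)
  also have "e * (w J \<bullet> (y - c)) = norm (w J) * r" unfolding wz using e1 by (simp add: algebra_simps)
  also note ey
  also have "2 * real CARD('n) / r^2 * (norm (w J) * r)
     = 2 * sqrt (real CARD('n)) * sqrt (real (card J) * (real CARD('n) + 1 - real (card J)))"
    by (rule norm_w_sqrt[OF assms])
  finally have "e * Lf (tau J) y = psi CARD('n) (real (card J))" unfolding psi_card by (simp add: algebra_simps)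
  then have "\<bar>Lf (tau J) y\<bar> = psi CARD('n) (real (card J))"
  proof -
    assume h: "e * Lf (tau J) y = psi CARD('n) (real (card J))"
    have "\<bar>e * Lf (tau J) y\<bar> = \<bar>Lf (tau J) y\<bar>" using e1 by (simp add: abs_mult)
    moreover have "psi CARD('n) (real (card J)) \<ge> 0" unfolding psi_card
    proof -
      have "card J \<le> card {..CARD('n)}" using assms by (intro card_mono) auto
      then show "0 \<le> (2 * sqrt (real CARD('n)) * sqrt (real (card J) * (real CARD('n) + 1 - real (card J)))
          + \<bar>2 * real (card J) - (real CARD('n) + 1)\<bar>) / (real CARD('n) + 1)" by simp
    qed
    ultimately show ?thesis using h by simp
  qed
  moreover have "y \<in> cball c r" using yc by (simp add: dist_norm norm_minus_commute)
  ultimately show ?thesis by (intro bexI[where x=y]) simp_all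
qed

end

context rs
begin

lemma x_cball: "j \<le> CARD('n) \<Longrightarrow> x j \<in> cball c r"
  using ins unfolding inscribed_def by auto

lemma Lf_abs_bound:
  assumes "y \<in> cball c r" "\<And>j. j \<le> CARD('n) \<Longrightarrow> \<bar>\<sigma> j\<bar> \<le> 1"
  shows "\<bar>Lf \<sigma> y\<bar> \<le> max (psi CARD('n) (real_of_int \<lfloor>(real CARD('n) + 1)/2 - sqrt (real CARD('n) + 1)/2\<rfloor>))
                          (psi CARD('n) (real_of_int \<lfloor>(real CARD('n) + 1)/2 - sqrt (real CARD('n) + 1)/2\<rfloor> + 1))"
proof -
  define J where "J = {j. j \<le> CARD('n) \<and> lam j y \<ge> 0}"
  have JS: "J \<subseteq> {..CARD('n)}" unfolding J_def by auto
  have "\<bar>Lf \<sigma> y\<bar> \<le> (\<Sum>j\<le>CARD('n). \<bar>\<sigma> j * lam j y\<bar>)" unfolding Lf_def by (rule sum_abs)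
  also have "\<dots> \<le> (\<Sum>j\<le>CARD('n). tau J j * lam j y)"
  proof (rule sum_mono)
    fix j assume "j \<in> {..CARD('n)}"
    then have j: "j \<le> CARD('n)" by simp
    have "\<bar>\<sigma> j * lam j y\<bar> = \<bar>\<sigma> j\<bar> * \<bar>lam j y\<bar>" by (rule abs_mult)
    also have "\<dots> \<le> 1 * \<bar>lam j y\<bar>" using assms(2)[OF j] by (intro mult_right_mono) auto
    also have "\<dots> = tau J j * lam j y" unfolding tau_def J_def using j by auto
    finally show "\<bar>\<sigma> j * lam j y\<bar> \<le> tau J j * lam j y" .
  qed
  also have "\<dots> = Lf (tau J) y" unfolding Lf_def ..
  also have "\<dots> \<le> psi CARD('n) (real (card J))" by (rule Lf_sign_upper[OF JS assms(1)])
  also have "\<dots> \<le> max (psi CARD('n) (real_of_int \<lfloor>(real CARD('n) + 1)/2 - sqrt (real CARD('n) + 1)/2\<rfloor>))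
                          (psi CARD('n) (real_of_int \<lfloor>(real CARD('n) + 1)/2 - sqrt (real CARD('n) + 1)/2\<rfloor> + 1))"
  proof -
    have "card J \<le> card {..CARD('n)}" using JS by (intro card_mono) auto
    then have "real_of_int (int (card J)) \<le> real CARD('n) + 1" by simp
    from psi_le_M[OF refl _ this] show ?thesis by simp
  qed
  finally show ?thesis .
qed

lemma M_achieved:
  "\<exists>f. continuous_on (cball c r) f \<and> (\<forall>y\<in>cball c r. \<bar>f y\<bar> \<le> 1) \<and>
     (\<exists>y\<in>cball c r. max (psi CARD('n) (real_of_int \<lfloor>(real CARD('n) + 1)/2 - sqrt (real CARD('n) + 1)/2\<rfloor>))
                          (psi CARD('n) (real_of_int \<lfloor>(real CARD('n) + 1)/2 - sqrt (real CARD('n) + 1)/2\<rfloor> + 1))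
        \<le> \<bar>interp x f y\<bar>)"
proof -
  define a where "a = \<lfloor>(real CARD('n) + 1)/2 - sqrt (real CARD('n) + 1)/2\<rfloor>"
  note af = a_facts[OF a_def]
  define k where "k = (if psi CARD('n) (real_of_int a + 1) \<le> psi CARD('n) (real_of_int a) then a else a + 1)"
  have k0: "0 \<le> k" "real_of_int k \<le> real CARD('n) + 1" unfolding k_def using af by auto
  have pk: "psi CARD('n) (real_of_int k) = max (psi CARD('n) (real_of_int a)) (psi CARD('n) (real_of_int a + 1))"
    unfolding k_def by auto
  define J where "J = {..<nat k}"
  have JS: "J \<subseteq> {..CARD('n)}"
  proof -
    have "real_of_int k \<le> real_of_int (int CARD('n) + 1)" using k0 by simp
    then have "k \<le> int CARD('n) + 1" by (simp only: of_int_le_iff)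
    then show ?thesis unfolding J_def by auto
  qed
  have cJ: "real (card J) = real_of_int k" unfolding J_def using k0 by simp
  define f where "f y = max (-1) (min 1 (Lf (tau J) y))" for y
  obtain A B where AB: "Lf (tau J) = (\<lambda>y. A \<bullet> y + B)" using Lf_Pi1[of "tau J"] unfolding Pi1_def by blast
  have cont: "continuous_on (cball c r) f" unfolding f_def AB by (intro continuous_intros)
  have bnd: "\<forall>y\<in>cball c r. \<bar>f y\<bar> \<le> 1" unfolding f_def by auto
  have "interp x f = Lf (\<lambda>j. f (x j))" by (rule interp_eq)
  also have "\<dots> = Lf (tau J)"
  proof (rule Lf_cong)
    fix j assume "j \<le> CARD('n)"
    then show "f (x j) = tau J j" unfolding f_def Lf_x[OF \<open>j \<le> CARD('n)\<close>] tau_def by auto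
  qed
  finally have ie: "interp x f = Lf (tau J)" .
  obtain y where y: "y \<in> cball c r" "psi CARD('n) (real (card J)) \<le> \<bar>Lf (tau J) y\<bar>"
    using Lf_sign_lower[OF JS] by blast
  have "max (psi CARD('n) (real_of_int a)) (psi CARD('n) (real_of_int a + 1)) \<le> \<bar>interp x f y\<bar>"
    using y(2) unfolding ie cJ pk .
  then show ?thesis
    using cont bnd y(1) unfolding a_def by blast
qed

lemma proj_norm_eq:
  "proj_norm x (cball c r) = max (psi CARD('n) (real_of_int \<lfloor>(real CARD('n) + 1)/2 - sqrt (real CARD('n) + 1)/2\<rfloor>))
                          (psi CARD('n) (real_of_int \<lfloor>(real CARD('n) + 1)/2 - sqrt (real CARD('n) + 1)/2\<rfloor> + 1))"
  (is "_ = ?M")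
proof -
  define S where "S = {Sup ((\<lambda>y. \<bar>interp x f y\<bar>) ` cball c r) | f.
      continuous_on (cball c r) f \<and> (\<forall>y\<in>cball c r. \<bar>f y\<bar> \<le> 1)}"
  have ne: "cball c r \<noteq> {}" using r by simp
  have pt: "\<bar>interp x f y\<bar> \<le> ?M" if "\<forall>y\<in>cball c r. \<bar>f y\<bar> \<le> 1" "y \<in> cball c r" for f y
    unfolding interp_eq using that x_cball by (intro Lf_abs_bound) auto
  have inner: "Sup ((\<lambda>y. \<bar>interp x f y\<bar>) ` cball c r) \<le> ?M" if "\<forall>y\<in>cball c r. \<bar>f y\<bar> \<le> 1" for f
    using ne pt[OF that] by (intro cSup_least) auto
  have bddi: "bdd_above ((\<lambda>y. \<bar>interp x f y\<bar>) ` cball c r)" if "\<forall>y\<in>cball c r. \<bar>f y\<bar> \<le> 1" for f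
    using pt[OF that] by (intro bdd_aboveI[where M="?M"]) auto
  have Sne: "S \<noteq> {}" unfolding S_def by (rule ccontr) (auto dest: spec[where x="\<lambda>_. 0"])
  have Sle: "\<forall>s\<in>S. s \<le> ?M" unfolding S_def using inner by auto
  have up: "Sup S \<le> ?M" using Sne Sle by (intro cSup_least) auto
  obtain f0 y0 where f0: "continuous_on (cball c r) f0" "\<forall>y\<in>cball c r. \<bar>f0 y\<bar> \<le> 1"
      "y0 \<in> cball c r" "?M \<le> \<bar>interp x f0 y0\<bar>"
    using M_achieved by blast
  have "?M \<le> Sup ((\<lambda>y. \<bar>interp x f0 y\<bar>) ` cball c r)"
    using f0 bddi[OF f0(2)] by (intro cSup_upper2[where x="\<bar>interp x f0 y0\<bar>"]) auto
  also have "\<dots> \<le> Sup S"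
  proof (rule cSup_upper)
    show "Sup ((\<lambda>y. \<bar>interp x f0 y\<bar>) ` cball c r) \<in> S" unfolding S_def using f0 by blast
    show "bdd_above S" using Sle by (intro bdd_aboveI[where M="?M"]) auto
  qed
  finally have "?M \<le> Sup S" .
  with up have "Sup S = ?M" by simp
  then show ?thesis unfolding proj_norm_def S_def .
qed

end

theorem theorem11p2:
  fixes c :: "real^'n" and r :: real and x :: "nat \<Rightarrow> real^'n"
  assumes "r > 0"
    and "regular_simplex x"
    and "inscribed x c r"
  defines "n \<equiv> CARD('n)"
  defines "a \<equiv> \<lfloor>(real n + 1) / 2 - sqrt (real n + 1) / 2\<rfloor>"
  defines "N \<equiv> proj_norm x (cball c r)"
  shows "N = max (psi n (real_of_int a)) (psi n (real_of_int a + 1))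
    \<and> sqrt (real n) \<le> N \<and> N \<le> sqrt (real n + 1)
    \<and> (N = sqrt (real n) \<longleftrightarrow> n = 1)
    \<and> (N = sqrt (real n + 1) \<longleftrightarrow> sqrt (real n + 1) \<in> \<int>)"
proof -
  interpret rs c r x using assms(1-3) by unfold_locales
  have a': "a = \<lfloor>(real n + 1) / 2 - sqrt (real n + 1) / 2\<rfloor>" unfolding a_def ..
  have NM: "N = max (psi n (real_of_int a)) (psi n (real_of_int a + 1))"
    unfolding N_def n_def a_def by (rule proj_norm_eq)
  have n1: "n \<ge> 1" unfolding n_def by (simp add: Suc_leI)
  have le: "N \<le> sqrt (real n + 1)" using M_le_sqrt[OF a'] NM by simp
  have eq2: "N = sqrt (real n + 1) \<longleftrightarrow> sqrt (real n + 1) \<in> \<int>" using M_eq[OF a'] NM by simp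
  have ge: "sqrt (real n) \<le> N" and eq1: "N = sqrt (real n) \<longleftrightarrow> n = 1"
  proof -
    show "sqrt (real n) \<le> N"
    proof (cases "n = 1")
      case True then show ?thesis using M_one[OF a' True] NM by simp
    next
      case False then have "n \<ge> 2" using n1 by simp
      then show ?thesis using M_gt[OF a'] NM by simp
    qed
    show "N = sqrt (real n) \<longleftrightarrow> n = 1"
    proof
      assume h: "N = sqrt (real n)"
      show "n = 1"
      proof (rule ccontr)
        assume "n \<noteq> 1" then have "n \<ge> 2" using n1 by simp
        then show False using M_gt[OF a'] NM h by simp
      qed
    next
      assume h: "n = 1" then show "N = sqrt (real n)" using M_one[OF a' h] NM by simp
    qed
  qed
  show ?thesis using NM ge le eq1 eq2 by blast
qed

end
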